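(* Let $x$ be an indeterminate and let $m,n$ be positive integers with $m\geq n$. Then, as an identity of rational functions in $x$ over $\mathbb{Q}$, \begin{multline*} \sum_{k=0}^{n} \binom{m+k}{k} \binom{m}{k} \binom{n+k}{k} \binom{n}{k} \Biggl\{ \frac{-k}{(x+k)^2} + \frac{1+k \bigl(H_{m+k}^{(1)} +H_{m-k}^{(1)} + H_{n+k}^{(1)} + H_{n-k}^{(1)} -4H_k^{(1)}\bigr)}{x+k} \Biggr\} \\ +\sum_{k=n+1}^{m} \frac{(-1)^{k-n}}{x+k} \binom{m+k}{k} \binom{m}{k} \binom{n+k}{k} \Big/ \binom{k-1}{n} =\frac{x\, (1-x)_{n}\, (1-x)_{m}}{(x)_{n+1}\, (x)_{m+1}}. \end{multline*}
   Context: For non-negative integers $i$ and $n$, the generalized harmonic sum is $H^{(i)}_{n}:=\sum_{j=1}^{n} j^{-i}$ for $n\ge 1$, and $H^{(i)}_{0}:=0$. For $a$ and a non-negative integer $n$, $(a)_n$ denotes the rising factorial: $(a)_0:=1$ and $(a)_n:=a(a+1)\cdots(a+n-1)$ for $n>0$. An empty sum equals $0$. *)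

theory Defs
  imports Complex_Main
begin

definition gharm :: "nat \<Rightarrow> nat \<Rightarrow> rat" where
  "gharm i n = (\<Sum>j=1..n. 1 / (of_nat j) ^ i)"

end

theory Submission
  imports Defs
begin


definition FF :: "(nat\<Rightarrow>real) \<Rightarrow> (nat\<Rightarrow>real) \<Rightarrow> nat set \<Rightarrow> real \<Rightarrow> real" where
 "FF c d K x = (\<Sum>k\<in>K. c k / (x + real k) + d k / (x + real k)^2)"

definition HH :: "nat \<Rightarrow> real" where "HH n = (\<Sum>j=1..n. 1 / real j)"
definition cc :: "nat \<Rightarrow> nat \<Rightarrow> nat \<Rightarrow> real" where
 "cc m n k = real ((m+k) choose k) * real (m choose k) * real ((n+k) choose k) * real (n choose k)"
definition SS :: "nat \<Rightarrow> nat \<Rightarrow> nat \<Rightarrow> real" where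
 "SS m n k = HH (m+k) + HH (m-k) + HH (n+k) + HH (n-k) - 4 * HH k"
definition ee :: "nat \<Rightarrow> nat \<Rightarrow> nat \<Rightarrow> real" where
 "ee m n k = (-1)^(k-n) * real ((m+k) choose k) * real (m choose k) * real ((n+k) choose k) / real ((k-1) choose n)"
definition cf :: "nat \<Rightarrow> nat \<Rightarrow> nat \<Rightarrow> real" where
 "cf m n k = (if k \<le> n then cc m n k * (1 + real k * SS m n k) else ee m n k)"
definition df :: "nat \<Rightarrow> nat \<Rightarrow> nat \<Rightarrow> real" where
 "df m n k = (if k \<le> n then - cc m n k * real k else 0)"

lemma HH_0[simp]: "HH 0 = 0" by (simp add: HH_def)
lemma HH_Suc: "HH (Suc n) = HH n + 1 / real (Suc n)" by (simp add: HH_def)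

lemma step_term:
  fixes b x c d k :: real
  assumes "k \<noteq> b" "x + b \<noteq> 0" "x + k \<noteq> 0"
  shows "(c / (x + k) + d / (x + k)^2) * ((b - x)/(x + b)) =
   (c * (b + k)/(b - k) - 2*b*d/(b-k)^2) / (x + k) + (d*(b+k)/(b-k)) / (x+k)^2
   + 2*b*(c / (-b + k) + d / (-b + k)^2) / (x+b)"
proof -
  have h: "b - k \<noteq> 0" "-b + k \<noteq> 0" using assms by auto
  have e: "-b + k = -(b-k)" by simp
  show ?thesis unfolding e using h assms
    by (simp add: divide_simps) (simp add: algebra_simps power2_eq_square power3_eq_cube)
qed

lemma stepA:
  fixes b :: real
  assumes "finite K" "\<forall>k\<in>K. real k \<noteq> b" "x + b \<noteq> 0" "\<forall>k\<in>K. x + real k \<noteq> 0"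
  shows "FF c d K x * ((b - x)/(x + b)) = FF (\<lambda>k. c k * (b + k)/(b - k) - 2*b*d k/(b-k)^2) (\<lambda>k. d k*(b+k)/(b-k)) K x + 2*b*FF c d K (-b) / (x+b)"
proof -
  have "FF c d K x * ((b - x)/(x + b)) = (\<Sum>k\<in>K. (c k / (x + real k) + d k / (x + real k)^2) * ((b - x)/(x + b)))"
    unfolding FF_def by (simp only: sum_distrib_right)
  also have "\<dots> = (\<Sum>k\<in>K. (c k * (b + k)/(b - k) - 2*b*d k/(b-k)^2) / (x + k) + (d k*(b+k)/(b-k)) / (x+k)^2
   + 2*b*(c k / (-b + k) + d k / (-b + k)^2) / (x+b))"
    by (rule sum.cong[OF refl], rule step_term) (use assms in auto)
  also have "\<dots> = FF (\<lambda>k. c k * (b + k)/(b - k) - 2*b*d k/(b-k)^2) (\<lambda>k. d k*(b+k)/(b-k)) K x + 2*b*FF c d K (-b) / (x+b)"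
  proof -
    have X: "2*b*FF c d K (-b)/(x+b) = (\<Sum>k\<in>K. 2*b*(c k/(-b+k) + d k/(-b+k)^2)/(x+b))"
      by (simp add: FF_def sum_distrib_left sum_divide_distrib)
    show ?thesis unfolding X unfolding FF_def sum.distrib by simp
  qed
  finally show ?thesis .
qed

lemma HH_shift: "(\<Sum>i<n. 1 / (real c + 1 + real i)) = HH (c+n) - HH c"
  by (induction n) (auto simp: HH_Suc add_ac)

lemma HH_rev: "(\<Sum>i<a. 1 / (real a - real i)) = HH a"
proof (induction a)
  case (Suc a)
  have "(\<Sum>i<Suc a. 1 / (real (Suc a) - real i)) = 1 / real (Suc a) + (\<Sum>i<a. 1 / (real (Suc a) - real (Suc i)))"
    by (subst sum.lessThan_Suc_shift) simp
  also have "\<dots> = 1 / real (Suc a) + HH a" using Suc by simp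
  finally show ?case by (simp add: HH_Suc)
qed simp

lemma HH_up: "a \<le> m \<Longrightarrow> (\<Sum>j\<in>{Suc a..m}. 1 / (real j - real a)) = HH (m - a)"
proof (induction m)
  case (Suc m)
  show ?case
  proof (cases "a = Suc m")
    case True then show ?thesis by simp
  next
    case False
    then have "a \<le> m" using Suc by simp
    then have "(\<Sum>j\<in>{Suc a..Suc m}. 1 / (real j - real a)) = HH (m - a) + 1 / (real (Suc m) - real a)"
      using Suc by (simp add: sum.cl_ivl_Suc)
    also have "\<dots> = HH (Suc m - a)" using \<open>a \<le> m\<close> by (simp add: Suc_diff_le HH_Suc of_nat_diff)
    finally show ?thesis .
  qed
qed simp

lemma B1: "real ((Suc m + k) choose k) * (real m + 1) = real ((m+k) choose k) * (real m + 1 + real k)"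
proof -
  have f1: "(fact (Suc (m + k))::real) = (real m + 1 + real k) * fact (m+k)" by (simp only: fact_Suc of_nat_Suc of_nat_add) algebra
  have f2: "(fact (Suc m)::real) = (real m + 1) * fact m" by simp
  have p: "real m + 1 \<noteq> 0" by linarith
  show ?thesis using p by (simp add: binomial_fact f1 f2 del: fact_Suc)
qed

lemma B2: "k \<le> m \<Longrightarrow> real (Suc m choose k) * (real m + 1 - real k) = real (m choose k) * (real m + 1)"
proof -
  assume k: "k \<le> m"
  have f1: "(fact (Suc m - k)::real) = (real m + 1 - real k) * fact (m-k)" using k by (simp add: Suc_diff_le of_nat_diff)
  have f2: "(fact (Suc m)::real) = (real m + 1) * fact m" by simp
  have p: "real m + 1 - real k \<noteq> 0" using k by linarith
  show ?thesis using p k by (simp add: binomial_fact f1 f2 del: fact_Suc)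
qed

lemma B3: "Suc n \<le> j \<Longrightarrow> real (j choose Suc n) * (real n + 1) = real (j choose n) * (real j - real n)"
proof -
  assume k: "Suc n \<le> j"
  have f1: "(fact (j - n)::real) = (real j - real n) * fact (j - Suc n)" using k
    by (metis Suc_diff_Suc Suc_le_lessD fact_Suc of_nat_diff of_nat_fact of_nat_mult less_imp_le)
  have f2: "(fact (Suc n)::real) = (real n + 1) * fact n" by simp
  have p: "real j - real n \<noteq> 0" "real n + 1 \<noteq> 0" using k by linarith+
  show ?thesis using p k by (simp add: binomial_fact f1 f2 del: fact_Suc)
qed




lemma aux1: fixes A B C D b k :: real shows "b \<noteq> 0 \<Longrightarrow> b - k \<noteq> 0 \<Longrightarrow> (A*(b+k)/b) * (B*b/(b-k)) * C * D = A*B*C*D*(b+k)/(b-k)"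
  by (simp add: field_simps)
lemma aux1': fixes A B C D b k :: real shows "b \<noteq> 0 \<Longrightarrow> b - k \<noteq> 0 \<Longrightarrow> A * B * (C*(b+k)/b) * (D*b/(b-k)) = A*B*C*D*(b+k)/(b-k)"
  by (simp add: field_simps)
lemma aux2: fixes A B C D b k s :: real shows "b \<noteq> 0 \<Longrightarrow> b - k \<noteq> 0 \<Longrightarrow> E \<noteq> 0 \<Longrightarrow> s * (A*(b+k)/b) * (B*b/(b-k)) * C / E = (s*A*B*C/E)*(b+k)/(b-k)"
  by (simp add: field_simps)
lemma aux3: fixes A B C D a k s :: real shows "a \<noteq> 0 \<Longrightarrow> a - k \<noteq> 0 \<Longrightarrow> E \<noteq> 0 \<Longrightarrow>
   -s * A * B * (C*(a+k)/a) / (E*(k-a)/a) = (s*A*B*C/E)*(a+k)/(a-k)"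
  by (simp add: field_simps)
lemma aux4: fixes c S b k :: real shows "b - k \<noteq> 0 \<Longrightarrow> b + k \<noteq> 0 \<Longrightarrow>
  c*(1+k*S)*(b+k)/(b-k) - 2*b*(-c*k)/(b-k)^2 = (c*(b+k)/(b-k)) * (1 + k*(S + 1/(b+k) + 1/(b-k)))"
proof -
  assume h: "b - k \<noteq> 0" "b + k \<noteq> 0"
  obtain p q where pq: "p = b + k" "q = b - k" by blast
  have b: "b = (p+q)/2" "k = (p-q)/2" using pq by simp_all
  have "p \<noteq> 0" "q \<noteq> 0" using h pq by auto
  then show ?thesis unfolding b by (simp add: field_simps power2_eq_square)
qed


lemma cc_m: "k \<le> m \<Longrightarrow> cc (Suc m) n k = cc m n k * (real m + 1 + real k)/(real m + 1 - real k)"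
proof -
  assume k: "k \<le> m"
  have p: "real m + 1 - real k \<noteq> 0" "real m + 1 \<noteq> 0" using k by linarith+
  have e1: "real ((Suc m + k) choose k) = real ((m+k) choose k) * (real m + 1 + real k) / (real m + 1)"
    using B1[of m k] p by (simp add: field_simps)
  have e2: "real (Suc m choose k) = real (m choose k) * (real m + 1) / (real m + 1 - real k)"
    using B2[OF k] p by (simp add: field_simps)
  show ?thesis unfolding cc_def e1 e2 by (rule aux1) (use p in auto)
qed

lemma cc_n: "k \<le> n \<Longrightarrow> cc m (Suc n) k = cc m n k * (real n + 1 + real k)/(real n + 1 - real k)"
proof -
  assume k: "k \<le> n"
  have p: "real n + 1 - real k \<noteq> 0" "real n + 1 \<noteq> 0" using k by linarith+
  have e1: "real ((Suc n + k) choose k) = real ((n+k) choose k) * (real n + 1 + real k) / (real n + 1)"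
    using B1[of n k] p by (simp add: field_simps)
  have e2: "real (Suc n choose k) = real (n choose k) * (real n + 1) / (real n + 1 - real k)"
    using B2[OF k] p by (simp add: field_simps)
  show ?thesis unfolding cc_def e1 e2 by (rule aux1') (use p in auto)
qed

lemma SS_m: "k \<le> m \<Longrightarrow> SS (Suc m) n k = SS m n k + 1/(real m + 1 + real k) + 1/(real m + 1 - real k)"
proof -
  assume k: "k \<le> m"
  have "HH (Suc m + k) = HH (m+k) + 1/(real m + 1 + real k)" by (simp add: HH_Suc add_ac)
  moreover have "HH (Suc m - k) = HH (m-k) + 1/(real m + 1 - real k)"
    using k by (simp add: Suc_diff_le HH_Suc of_nat_diff add_ac)
  ultimately show ?thesis by (simp add: SS_def)
qed

lemma SS_n: "k \<le> n \<Longrightarrow> SS m (Suc n) k = SS m n k + 1/(real n + 1 + real k) + 1/(real n + 1 - real k)"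
proof -
  assume k: "k \<le> n"
  have "HH (Suc n + k) = HH (n+k) + 1/(real n + 1 + real k)" by (simp add: HH_Suc add_ac)
  moreover have "HH (Suc n - k) = HH (n-k) + 1/(real n + 1 - real k)"
    using k by (simp add: Suc_diff_le HH_Suc of_nat_diff add_ac)
  ultimately show ?thesis by (simp add: SS_def)
qed

lemma ee_m: "n < k \<Longrightarrow> k \<le> m \<Longrightarrow> ee (Suc m) n k = ee m n k * (real m + 1 + real k)/(real m + 1 - real k)"
proof -
  assume nk: "n < k" and k: "k \<le> m"
  have p: "real m + 1 - real k \<noteq> 0" "real m + 1 \<noteq> 0" using k by linarith+
  have e1: "real ((Suc m + k) choose k) = real ((m+k) choose k) * (real m + 1 + real k) / (real m + 1)"
    using B1[of m k] p by (simp add: field_simps)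
  have e2: "real (Suc m choose k) = real (m choose k) * (real m + 1) / (real m + 1 - real k)"
    using B2[OF k] p by (simp add: field_simps)
  have nz: "real ((k-1) choose n) \<noteq> 0" using nk by simp
  show ?thesis unfolding ee_def e1 e2 by (rule aux2) (use p nz in auto)
qed

lemma ee_n: "Suc n < k \<Longrightarrow> ee m (Suc n) k = ee m n k * (real n + 1 + real k)/(real n + 1 - real k)"
proof -
  assume k: "Suc n < k"
  have p: "real n + 1 - real k \<noteq> 0" "real n + 1 \<noteq> 0" "real k - 1 - real n \<noteq> 0" using k by linarith+
  have e1: "real ((Suc n + k) choose k) = real ((n+k) choose k) * (real n + 1 + real k) / (real n + 1)"
    using B1[of n k] p by (simp add: field_simps)
  have "Suc n \<le> k - 1" using k by simp
  from B3[OF this] have e2: "real ((k-1) choose Suc n) = real ((k-1) choose n) * (real k - (real n + 1)) / (real n + 1)"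
    using p k by (simp add: field_simps of_nat_diff)
  have s: "(-1::real)^(k - Suc n) = - ((-1)^(k-n))"
  proof -
    have "k - n = Suc (k - Suc n)" using k by simp
    then show ?thesis by simp
  qed
  have nz: "real ((k-1) choose n) \<noteq> 0" using k by simp
  show ?thesis unfolding ee_def e1 e2 s by (rule aux3) (use p nz in auto)
qed

lemma CM:
  assumes "k \<le> m"
  defines "b \<equiv> real m + 1"
  shows "cf m n k*(b+k)/(b-k) - 2*b*df m n k/(b-k)^2 = cf (Suc m) n k"
    and "df m n k*(b+k)/(b-k) = df (Suc m) n k"
proof -
  have p: "b - k \<noteq> 0" "b + k \<noteq> 0" using assms by linarith+
  show "cf m n k*(b+k)/(b-k) - 2*b*df m n k/(b-k)^2 = cf (Suc m) n k"
  proof (cases "k \<le> n")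
    case True
    have e: "cf m n k = cc m n k*(1+k*SS m n k)" "df m n k = -cc m n k*k"
      "cf (Suc m) n k = (cc m n k*(b+k)/(b-k))*(1+k*(SS m n k + 1/(b+k)+1/(b-k)))"
      using True assms by (simp_all add: cf_def df_def cc_m SS_m)
    show ?thesis unfolding e by (rule aux4) (use p in auto)
  next
    case False
    then show ?thesis unfolding cf_def df_def using assms p by (simp add: ee_m cc_m)
  qed
  show "df m n k*(b+k)/(b-k) = df (Suc m) n k"
    unfolding df_def using assms p by (simp add: cc_m)
qed

lemma CN:
  assumes "k \<noteq> Suc n"
  defines "a \<equiv> real n + 1"
  shows "cf m n k*(a+k)/(a-k) - 2*a*df m n k/(a-k)^2 = cf m (Suc n) k"
    and "df m n k*(a+k)/(a-k) = df m (Suc n) k"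
proof -
  have p: "a - k \<noteq> 0" "a + k \<noteq> 0" using assms by auto
  show "cf m n k*(a+k)/(a-k) - 2*a*df m n k/(a-k)^2 = cf m (Suc n) k"
  proof (cases "k \<le> n")
    case True
    have e: "cf m n k = cc m n k*(1+k*SS m n k)" "df m n k = -cc m n k*k"
      "cf m (Suc n) k = (cc m n k*(a+k)/(a-k))*(1+k*(SS m n k + 1/(a+k)+1/(a-k)))"
      using True assms by (simp_all add: cf_def df_def cc_n SS_n)
    show ?thesis unfolding e by (rule aux4) (use p in auto)
  next
    case False
    then have "Suc n < k" using assms by simp
    then show ?thesis unfolding cf_def df_def using assms p False by (simp add: ee_n)
  qed
  show "df m n k*(a+k)/(a-k) = df m (Suc n) k"
    unfolding df_def using assms p by (simp add: cc_n)
qed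

lemma auxC: fixes p G F :: real shows "p \<noteq> 0 \<Longrightarrow> G \<noteq> 0 \<Longrightarrow> (2*p)*F/((p*G)*(p*G)) = 2*(F/((p*G)*G))"
  by (simp add: field_simps)

lemma C2: "real ((Suc (Suc (2*n))) choose (Suc n)) = 2 * real (Suc (2*n) choose Suc n)"
proof -
  have e: "Suc (Suc (2*n)) - Suc n = Suc n" "Suc (2*n) - Suc n = n" by simp_all
  have h1: "real ((Suc (Suc (2*n))) choose (Suc n)) = fact (Suc (Suc (2*n))) / (fact (Suc n) * fact (Suc n))"
    apply (subst binomial_fact)
     apply simp
    apply (simp only: e)
    done
  have h2: "real ((Suc (2*n)) choose (Suc n)) = fact (Suc (2*n)) / (fact (Suc n) * fact n)"
    apply (subst binomial_fact)
     apply simp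
    apply (simp only: e)
    done
  have f1: "(fact (Suc (Suc (2*n)))::real) = (2*(real n + 1)) * fact (Suc (2*n))"
    by (simp only: fact_Suc of_nat_Suc of_nat_add of_nat_mult) simp
  have f2: "(fact (Suc n)::real) = (real n + 1) * fact n" by simp
  have p: "real n + 1 \<noteq> 0" by linarith
  show ?thesis unfolding h1 h2 f1 f2 by (rule auxC) (use p in auto)
qed

lemma ee_a: "ee m n (Suc n) = - cc m (Suc n) (Suc n) / 2"
proof -
  have e: "Suc n + Suc n = Suc (Suc (2*n))" "n + Suc n = Suc (2*n)" "Suc n - n = 1" "Suc n - 1 = n" by simp_all
  show ?thesis unfolding ee_def cc_def e using C2[of n] by (simp del: binomial_Suc_Suc)
qed




definition RR :: "nat \<Rightarrow> nat \<Rightarrow> real \<Rightarrow> real" where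
 "RR m n x = x * pochhammer (1-x) n * pochhammer (1-x) m / (pochhammer x (Suc n) * pochhammer x (Suc m))"

definition PP :: "nat \<Rightarrow> nat \<Rightarrow> bool" where
 "PP m n \<longleftrightarrow> (\<forall>x. (\<forall>k\<le>m. x + real k \<noteq> 0) \<longrightarrow> FF (cf m n) (df m n) {0..m} x = RR m n x)"

lemma FF_cong: "(\<And>k. k \<in> K \<Longrightarrow> c k = c' k) \<Longrightarrow> (\<And>k. k \<in> K \<Longrightarrow> d k = d' k) \<Longrightarrow> FF c d K x = FF c' d' K x"
  unfolding FF_def by (rule sum.cong) auto

lemma RR_m: "RR (Suc m) n x = RR m n x * ((real m + 1 - x)/(x + (real m + 1)))"
proof -
  have "RR (Suc m) n x = (x * pochhammer (1-x) n * pochhammer (1-x) m * (1 - x + real m)) /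
     (pochhammer x (Suc n) * pochhammer x (Suc m) * (x + real (Suc m)))"
    unfolding RR_def pochhammer_Suc[of "1-x" m] pochhammer_Suc[of x "Suc m"] by (simp add: ac_simps)
  also have "\<dots> = RR m n x * ((real m + 1 - x)/(x + (real m + 1)))"
    unfolding RR_def times_divide_times_eq by (simp add: ac_simps)
  finally show ?thesis .
qed

lemma RR_n: "RR m (Suc n) x = RR m n x * ((real n + 1 - x)/(x + (real n + 1)))"
proof -
  have "RR m (Suc n) x = (x * pochhammer (1-x) n * pochhammer (1-x) m * (1 - x + real n)) /
     (pochhammer x (Suc n) * pochhammer x (Suc m) * (x + real (Suc n)))"
    unfolding RR_def pochhammer_Suc[of "1-x" n] pochhammer_Suc[of x "Suc n"] by (simp add: ac_simps)
  also have "\<dots> = RR m n x * ((real n + 1 - x)/(x + (real n + 1)))"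
    unfolding RR_def times_divide_times_eq by (simp add: ac_simps)
  finally show ?thesis .
qed

lemma poch_up: "pochhammer (1 + real b) n = fact (b+n) / (fact b :: real)"
proof -
  have "pochhammer (1::real) (b+n) = pochhammer 1 b * pochhammer (1 + of_nat b) n"
    by (rule pochhammer_product')
  then show ?thesis by (simp add: pochhammer_fact[symmetric] field_simps)
qed

lemma poch_negn: assumes "n \<le> m"
  shows "pochhammer (- real (Suc m)) (Suc n) = ((-1)^(Suc m) * fact (Suc m)) / ((-1)^(m-n) * fact (m-n))"
proof -
  have e1: "Suc n + (m-n) = Suc m" using assms by simp
  have e2: "- real (Suc m) + of_nat (Suc n) = - of_nat (m-n)" using assms by (simp add: of_nat_diff)
  have "pochhammer (- real (Suc m)) (Suc n + (m-n)) = pochhammer (- real (Suc m)) (Suc n) * pochhammer (- real (Suc m) + of_nat (Suc n)) (m-n)"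
    by (rule pochhammer_product')
  then have "pochhammer (- real (Suc m)) (Suc m) = pochhammer (- real (Suc m)) (Suc n) * pochhammer (- of_nat (m-n)) (m-n)"
    by (simp only: e1 e2)
  then have h: "((-1)^(Suc m) * fact (Suc m)) = pochhammer (- real (Suc m)) (Suc n) * ((-1)^(m-n) * fact (m-n))"
    by (simp only: pochhammer_same)
  have nz: "((-1::real)^(m-n) * fact (m-n)) \<noteq> 0" by simp
  show ?thesis using h nz by (simp add: eq_divide_eq)
qed

lemma auxR: fixes B FM F1 F2 FMN Fn s t :: real
  assumes "B \<noteq> 0" "FM \<noteq> 0" "FMN \<noteq> 0" "Fn \<noteq> 0" "t = 1 \<or> t = -1" "s = 1 \<or> s = -1"
  shows "2*B * ( -B*(F1/(B*FM))*(F2/(B*FM)) / ((t*(B*FM))/(s*FMN) * (t*(B*FM))) )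
     = (-s) * ((2*B*F2)/((B*FM)*(B*FM))) * 1 * (F1/((B*FM)*Fn)) / (FM/(Fn*FMN))"
  using assms by (auto simp: field_simps)

lemma neg1_cases: "((-1::real)^k = 1) \<or> ((-1::real)^k = -1)"
  by (induction k) auto

lemma Rneg: assumes "n \<le> m"
  shows "2*(real m + 1) * RR m n (-(real m + 1)) = ee (Suc m) n (Suc m)"
proof -
  define B where "B = real m + 1"
  have Bs: "B = real (Suc m)" by (simp add: B_def)
  have fb: "(fact (Suc m)::real) = B * fact m" by (simp add: B_def)
  have p1: "pochhammer (1 - - B) n = fact (Suc m + n) / fact (Suc m)"
    unfolding Bs using poch_up[of "Suc m" n] by (simp add: add_ac)
  have p2: "pochhammer (1 - - B) m = fact (Suc m + m) / fact (Suc m)"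
    unfolding Bs using poch_up[of "Suc m" m] by (simp add: add_ac)
  have p3: "pochhammer (- B) (Suc m) = (-1)^(Suc m) * fact (Suc m)"
    unfolding Bs by (rule pochhammer_same)
  have p4: "pochhammer (- B) (Suc n) = ((-1)^(Suc m) * fact (Suc m)) / ((-1)^(m-n) * fact (m-n))"
    unfolding Bs by (rule poch_negn[OF assms])
  have L: "2*B * RR m n (-B) = 2*B * ( -B*((fact (Suc m + n))/(B*fact m))*((fact (Suc m + m))/(B*fact m)) /
      (((-1)^(Suc m)*(B*fact m))/((-1)^(m-n)*fact (m-n)) * ((-1)^(Suc m)*(B*fact m))) )"
    unfolding RR_def p1 p2 p3 p4 fb by simp
  have c1: "real ((Suc m + Suc m) choose Suc m) = (2*B*fact (Suc m + m))/((B*fact m)*(B*fact m))"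
  proof -
    have "real ((Suc m + Suc m) choose Suc m) = fact (Suc m + Suc m) / (fact (Suc m) * fact (Suc m))"
      by (subst binomial_fact) simp_all
    moreover have "(fact (Suc m + Suc m)::real) = 2*B*fact (Suc m + m)"
    proof -
      have "real (Suc (Suc m + m)) = 2*B" by (simp add: B_def)
      then show ?thesis by (simp only: add_Suc_right fact_Suc)
    qed
    ultimately show ?thesis by (simp only: fb)
  qed
  have c2: "real ((n + Suc m) choose Suc m) = fact (Suc m + n) / ((B*fact m)*fact n)"
  proof -
    have e: "n + Suc m - Suc m = n" "n + Suc m = Suc m + n" "Suc m + n - Suc m = n" by simp_all
    show ?thesis apply (subst binomial_fact) apply simp apply (simp only: e fb) done
  qed
  have c3: "real ((Suc m - 1) choose n) = fact m / (fact n * fact (m-n))"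
    using assms by (subst binomial_fact) simp_all
  have sg: "(-1::real)^(Suc m - n) = - ((-1)^(m-n))"
    using assms by (simp add: Suc_diff_le)
  have R: "ee (Suc m) n (Suc m) = (- ((-1)^(m-n))) * ((2*B*fact (Suc m + m))/((B*fact m)*(B*fact m))) * 1
       * (fact (Suc m + n) / ((B*fact m)*fact n)) / (fact m / (fact n * fact (m-n)))"
    unfolding ee_def sg c1 c2 c3 by simp
  show ?thesis unfolding B_def[symmetric] L R
    apply (rule auxR)
    apply (simp add: B_def)
    apply simp
    apply simp
    apply simp
    apply (rule neg1_cases)
    apply (rule neg1_cases)
    done
qed




lemma DERIV_prod_log:
  fixes u :: "nat \<Rightarrow> real \<Rightarrow> real"
  assumes "finite I" "\<And>i. i \<in> I \<Longrightarrow> DERIV (u i) y :> u' i" "\<And>i. i \<in> I \<Longrightarrow> u i y \<noteq> 0"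
  shows "DERIV (\<lambda>x. \<Prod>i\<in>I. u i x) y :> (\<Prod>i\<in>I. u i y) * (\<Sum>i\<in>I. u' i / u i y)"
  using assms
proof (induction I rule: finite_induct)
  case empty then show ?case by simp
next
  case (insert j I)
  have d1: "DERIV (u j) y :> u' j" and nz: "u j y \<noteq> 0" using insert by auto
  have d2: "DERIV (\<lambda>x. \<Prod>i\<in>I. u i x) y :> (\<Prod>i\<in>I. u i y) * (\<Sum>i\<in>I. u' i / u i y)"
    using insert by auto
  have "DERIV (\<lambda>x. u j x * (\<Prod>i\<in>I. u i x)) y :> u' j * (\<Prod>i\<in>I. u i y) + ((\<Prod>i\<in>I. u i y) * (\<Sum>i\<in>I. u' i / u i y)) * u j y"
    by (rule DERIV_mult[OF d1 d2])
  moreover have "u' j * (\<Prod>i\<in>I. u i y) + ((\<Prod>i\<in>I. u i y) * (\<Sum>i\<in>I. u' i / u i y)) * u j y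
     = (u j y * (\<Prod>i\<in>I. u i y)) * (u' j / u j y + (\<Sum>i\<in>I. u' i / u i y))"
    using nz by (simp add: field_simps)
  ultimately show ?case using insert by simp
qed

lemma LD_mult: "DERIV f y :> f y * l1 \<Longrightarrow> DERIV g y :> g y * l2 \<Longrightarrow> DERIV (\<lambda>x. f x * g x) y :> (f y * g y) * (l1 + l2)"
  by (drule (1) DERIV_mult) (simp add: algebra_simps)

lemma LD_div: "DERIV f y :> f y * l1 \<Longrightarrow> DERIV g y :> g y * l2 \<Longrightarrow> (g y::real) \<noteq> 0 \<Longrightarrow> DERIV (\<lambda>x. f x / g x) y :> (f y / g y) * (l1 - l2)"
proof -
  assume h: "DERIV f y :> f y * l1" "DERIV g y :> g y * l2" "g y \<noteq> 0"
  have "DERIV (\<lambda>x. f x / g x) y :> (f y * l1 * g y - f y * (g y * l2)) / (g y * g y)"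
    by (rule DERIV_divide[OF h])
  moreover have "(f y * l1 * g y - f y * (g y * l2)) / (g y * g y) = (f y / g y) * (l1 - l2)"
    using h(3) by (simp add: field_simps)
  ultimately show ?thesis by simp
qed

lemma LD_id: "(y::real) \<noteq> 0 \<Longrightarrow> DERIV (\<lambda>x. x) y :> y * (1/y)"
  by (auto intro!: derivative_eq_intros)

definition phi :: "nat \<Rightarrow> nat \<Rightarrow> real \<Rightarrow> real" where
  "phi m n x = x * (\<Prod>i\<in>{0..<n}. 1 - x + real i) * (\<Prod>i\<in>{0..<m}. 1 - x + real i)
     / ((\<Prod>i\<in>{0..<Suc n}. x + real i) * (\<Prod>j\<in>{0..<Suc m}-{Suc n}. x + real j))"

definition Lam :: "nat \<Rightarrow> nat \<Rightarrow> real \<Rightarrow> real" where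
  "Lam m n y = ((1/y + (\<Sum>i\<in>{0..<n}. (-1) / (1 - y + real i))) + (\<Sum>i\<in>{0..<m}. (-1) / (1 - y + real i)))
     - ((\<Sum>i\<in>{0..<Suc n}. 1 / (y + real i)) + (\<Sum>j\<in>{0..<Suc m}-{Suc n}. 1 / (y + real j)))"

lemma phi_deriv:
  assumes "y \<noteq> 0" "\<forall>i<m. 1 - y + real i \<noteq> 0" "\<forall>j\<le>m. y + real j \<noteq> 0 \<or> j = Suc n" "Suc n \<le> m"
  shows "DERIV (phi m n) y :> phi m n y * Lam m n y"
proof -
  have P1: "DERIV (\<lambda>x. \<Prod>i\<in>{0..<n}. 1 - x + real i) y :> (\<Prod>i\<in>{0..<n}. 1 - y + real i) * (\<Sum>i\<in>{0..<n}. (-1) / (1 - y + real i))"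
    by (rule DERIV_prod_log) (use assms in \<open>auto intro!: derivative_eq_intros\<close>)
  have P2: "DERIV (\<lambda>x. \<Prod>i\<in>{0..<m}. 1 - x + real i) y :> (\<Prod>i\<in>{0..<m}. 1 - y + real i) * (\<Sum>i\<in>{0..<m}. (-1) / (1 - y + real i))"
    by (rule DERIV_prod_log) (use assms in \<open>auto intro!: derivative_eq_intros\<close>)
  have Q1: "DERIV (\<lambda>x. \<Prod>i\<in>{0..<Suc n}. x + real i) y :> (\<Prod>i\<in>{0..<Suc n}. y + real i) * (\<Sum>i\<in>{0..<Suc n}. 1 / (y + real i))"
    by (rule DERIV_prod_log) (use assms in \<open>auto intro!: derivative_eq_intros\<close>)
  have Q2: "DERIV (\<lambda>x. \<Prod>j\<in>{0..<Suc m}-{Suc n}. x + real j) y :> (\<Prod>j\<in>{0..<Suc m}-{Suc n}. y + real j) * (\<Sum>j\<in>{0..<Suc m}-{Suc n}. 1 / (y + real j))"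
    by (rule DERIV_prod_log) (use assms in \<open>auto intro!: derivative_eq_intros\<close>)
  have nz: "(\<Prod>i\<in>{0..<Suc n}. y + real i) * (\<Prod>j\<in>{0..<Suc m}-{Suc n}. y + real j) \<noteq> 0"
    using assms by auto
  show ?thesis unfolding phi_def Lam_def
    by (rule LD_div[OF LD_mult[OF LD_mult[OF LD_id[OF assms(1)] P1] P2] LD_mult[OF Q1 Q2] nz])
qed

lemma Lam_val: assumes "Suc n \<le> m"
  shows "Lam m n (-(real n + 1)) = -1/(2*(real n + 1)) - SS m (Suc n) (Suc n)"
proof -
  define a where "a = real n + 1"
  have s1: "(\<Sum>i\<in>{0..<n}. (-1) / (1 - - a + real i)) = -(HH (Suc n + n) - HH (Suc n))"
  proof -
    have "(\<Sum>i\<in>{0..<n}. (-1) / (1 - - a + real i)) = - (\<Sum>i<n. 1 / (real (Suc n) + 1 + real i))"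
      by (simp add: a_def atLeast0LessThan sum_negf[symmetric] add_ac)
    then show ?thesis by (simp only: HH_shift)
  qed
  have s2: "(\<Sum>i\<in>{0..<m}. (-1) / (1 - - a + real i)) = -(HH (Suc n + m) - HH (Suc n))"
  proof -
    have "(\<Sum>i\<in>{0..<m}. (-1) / (1 - - a + real i)) = - (\<Sum>i<m. 1 / (real (Suc n) + 1 + real i))"
      by (simp add: a_def atLeast0LessThan sum_negf[symmetric] add_ac)
    then show ?thesis by (simp only: HH_shift)
  qed
  have s3: "(\<Sum>i\<in>{0..<Suc n}. 1 / (- a + real i)) = - HH (Suc n)"
  proof -
    have "(\<Sum>i\<in>{0..<Suc n}. 1 / (- a + real i)) = - (\<Sum>i<Suc n. 1 / (real (Suc n) - real i))"
      unfolding atLeast0LessThan sum_negf[symmetric] by (rule sum.cong) (simp_all add: a_def field_simps)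
    then show ?thesis using HH_rev[of "Suc n"] by simp
  qed
  have s4: "(\<Sum>j\<in>{0..<Suc m}-{Suc n}. 1 / (- a + real j)) = - HH (Suc n) + HH (m - Suc n)"
  proof -
    have se: "{0..<Suc m}-{Suc n} = {0..<Suc n} \<union> {Suc (Suc n)..m}" using assms by auto
    have "(\<Sum>j\<in>{0..<Suc m}-{Suc n}. 1 / (- a + real j)) = (\<Sum>j\<in>{0..<Suc n}. 1 / (- a + real j)) + (\<Sum>j\<in>{Suc (Suc n)..m}. 1 / (- a + real j))"
      unfolding se by (rule sum.union_disjoint) auto
    also have "(\<Sum>j\<in>{Suc (Suc n)..m}. 1 / (- a + real j)) = HH (m - Suc n)"
    proof -
      have "(\<Sum>j\<in>{Suc (Suc n)..m}. 1 / (- a + real j)) = (\<Sum>j\<in>{Suc (Suc n)..m}. 1 / (real j - real (Suc n)))"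
        by (rule sum.cong) (simp_all add: a_def)
      then show ?thesis using HH_up[OF assms] by simp
    qed
    finally show ?thesis using s3 by simp
  qed
  have h: "HH (Suc n + Suc n) = HH (Suc n + n) + 1/(2*a)"
  proof -
    have "Suc n + Suc n = Suc (Suc n + n)" by simp
    then show ?thesis by (simp add: HH_Suc a_def)
  qed
  have a0: "a \<noteq> 0" by (simp add: a_def)
  have "Lam m n (-a) = -1/a - (HH (Suc n + n) - HH (Suc n)) - (HH (Suc n + m) - HH (Suc n)) - (- HH (Suc n) + (- HH (Suc n) + HH (m - Suc n)))"
    unfolding Lam_def s1 s2 s3 s4 by simp
  also have "\<dots> = -1/(2*a) - SS m (Suc n) (Suc n)"
    unfolding SS_def h using a0 by (simp add: add_ac field_simps)
  finally show ?thesis by (simp add: a_def)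
qed

lemma FF_remove: "finite K \<Longrightarrow> k0 \<in> K \<Longrightarrow> FF c d K x = FF c d (K - {k0}) x + c k0/(x + real k0) + d k0/(x + real k0)^2"
  unfolding FF_def by (subst sum.remove) auto

lemma auxP: fixes c X P1 P2 Q1 Q2 :: real shows "c \<noteq> 0 \<Longrightarrow> X*P1*P2/(Q1*Q2) = c*(X*P1*P2/(Q1*(c*Q2)))"
  by simp

lemma phiR: assumes "\<forall>k\<le>m. x + real k \<noteq> 0" "Suc n \<le> m"
  shows "phi m n x = (x + real (Suc n)) * RR m n x"
proof -
  have q: "pochhammer x (Suc m) = (x + real (Suc n)) * (\<Prod>j\<in>{0..<Suc m}-{Suc n}. x + real j)"
    unfolding pochhammer_prod by (subst prod.remove[of _ "Suc n"]) (use assms(2) in auto)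
  have nz: "x + real (Suc n) \<noteq> 0" using assms by blast
  show ?thesis unfolding phi_def RR_def q unfolding pochhammer_prod by (rule auxP[OF nz])
qed

lemma Gval: assumes "Suc n \<le> m" "PP m n"
  shows "FF (cf m n) (df m n) ({0..m}-{Suc n}) (-(real n+1)) = ee m n (Suc n) * (-1/(2*(real n + 1)) - SS m (Suc n) (Suc n))"
proof -
  define a where "a = real n + 1"
  define K where "K = {0..m} - {Suc n}"
  define G where "G = FF (cf m n) (df m n) K"
  define e where "e = ee m n (Suc n)"
  have a0: "a \<noteq> 0" by (simp add: a_def)
  have split: "\<And>x. FF (cf m n) (df m n) {0..m} x = G x + e/(x+a)"
    unfolding G_def K_def e_def a_def
    by (subst FF_remove[of _ "Suc n"]) (use assms(1) in \<open>auto simp: cf_def df_def add_ac\<close>)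
  have near: "\<forall>k\<le>m. x + real k \<noteq> 0" if "x \<noteq> -a" "dist x (-a) < 1/2" for x
  proof (intro allI impI)
    fix k assume "k \<le> m"
    show "x + real k \<noteq> 0"
    proof (cases "k = Suc n")
      case True then show ?thesis using that by (auto simp: a_def)
    next
      case False
      then have "k \<le> n \<or> k \<ge> Suc (Suc n)" by auto
      then have "\<bar>real k - a\<bar> \<ge> 1" by (auto simp: a_def)
      moreover have "\<bar>x + a\<bar> < 1/2" using that(2) by (simp add: dist_real_def)
      ultimately show ?thesis by linarith
    qed
  qed
  have ev: "eventually (\<lambda>x. phi m n x = (x+a) * G x + e) (at (-a))"
    unfolding eventually_at
  proof (intro exI[of _ "1/2"] conjI ballI impI)
    fix x assume h: "x \<in> UNIV" "x \<noteq> -a \<and> dist x (-a) < 1/2"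
    have hk: "\<forall>k\<le>m. x + real k \<noteq> 0" using near h by auto
    have xa: "x + a \<noteq> 0" using h by auto
    have "phi m n x = (x + a) * RR m n x" using phiR[OF hk assms(1)] unfolding a_def by simp
    also have "\<dots> = (x + a) * (G x + e/(x+a))" using assms(2) hk split unfolding PP_def by metis
    also have "\<dots> = (x+a) * G x + e" using xa by (simp add: field_simps)
    finally show "phi m n x = (x+a) * G x + e" .
  qed simp
  have Gc: "isCont G (-a)"
    unfolding G_def FF_def K_def
    by (intro continuous_intros) (auto simp: a_def)
  have D: "DERIV (phi m n) (-a) :> phi m n (-a) * Lam m n (-a)"
    by (rule phi_deriv) (use assms(1) in \<open>auto simp: a_def\<close>)
  have Gt: "(G \<longlongrightarrow> G (-a)) (at (-a))" using Gc by (simp add: isCont_def)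
  have phi0: "phi m n (-a) = e"
  proof -
    have A: "(phi m n \<longlongrightarrow> phi m n (-a)) (at (-a))" using DERIV_isCont[OF D] unfolding isCont_def .
    have "((\<lambda>x. (x+a) * G x + e) \<longlongrightarrow> (-a+a) * G (-a) + e) (at (-a))"
      by (intro tendsto_intros Gt)
    then have B: "(phi m n \<longlongrightarrow> (-a+a) * G (-a) + e) (at (-a))"
      using tendsto_cong[OF ev] by blast
    have "phi m n (-a) = (-a+a) * G (-a) + e" by (rule tendsto_unique[OF at_neq_bot A B])
    then show ?thesis by simp
  qed
  have L: "((\<lambda>y. (phi m n y - phi m n (-a))/(y - -a)) \<longlongrightarrow> phi m n (-a) * Lam m n (-a)) (at (-a))"
    using D unfolding has_field_derivative_iff .
  have EV2: "eventually (\<lambda>y. (phi m n y - phi m n (-a))/(y - -a) = G y) (at (-a))"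
  proof -
    have "eventually (\<lambda>y. y \<noteq> -a) (at (-a))" by (simp add: eventually_at_filter)
    then show ?thesis using ev
      by eventually_elim (simp add: phi0 field_simps)
  qed
  have C: "(G \<longlongrightarrow> phi m n (-a) * Lam m n (-a)) (at (-a))"
    by (rule iffD1[OF tendsto_cong[OF EV2] L])
  have "G (-a) = phi m n (-a) * Lam m n (-a)" by (rule tendsto_unique[OF at_neq_bot Gt C])
  then show ?thesis unfolding phi0 using Lam_val[OF assms(1)] by (simp add: G_def K_def e_def a_def)
qed




lemma FF_split_last:
  "FF c d {0..Suc m} x = FF c d {0..m} x + c (Suc m) / (x + real (Suc m)) + d (Suc m) / (x + real (Suc m))^2"
  unfolding FF_def by (simp add: sum.atLeast0_atMost_Suc)

lemma mstep: assumes "n \<le> m" "PP m n" shows "PP (Suc m) n"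
  unfolding PP_def
proof (intro allI impI)
  fix x assume hx: "\<forall>k\<le>Suc m. x + real k \<noteq> 0"
  define b where "b = real m + 1"
  have hb: "x + b \<noteq> 0" using hx[rule_format, of "Suc m"] by (simp add: b_def add_ac)
  have hx': "\<forall>k\<le>m. x + real k \<noteq> 0" using hx by auto
  have IH: "FF (cf m n) (df m n) {0..m} x = RR m n x" using assms(2) hx' unfolding PP_def by blast
  have IHb: "FF (cf m n) (df m n) {0..m} (-b) = RR m n (-b)"
    using assms(2) unfolding PP_def b_def by auto
  have "RR (Suc m) n x = RR m n x * ((b - x)/(x+b))" unfolding b_def by (rule RR_m)
  also have "\<dots> = FF (cf m n) (df m n) {0..m} x * ((b - x)/(x+b))" by (simp only: IH)
  also have "\<dots> = FF (\<lambda>k. cf m n k * (b + k)/(b - k) - 2*b*df m n k/(b-k)^2) (\<lambda>k. df m n k*(b+k)/(b-k)) {0..m} x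
       + 2*b*FF (cf m n) (df m n) {0..m} (-b) / (x+b)"
    by (rule stepA) (use hb hx' in \<open>auto simp: b_def\<close>)
  also have "\<dots> = FF (cf (Suc m) n) (df (Suc m) n) {0..m} x + ee (Suc m) n (Suc m) / (x+b)"
  proof -
    have "FF (\<lambda>k. cf m n k * (b + k)/(b - k) - 2*b*df m n k/(b-k)^2) (\<lambda>k. df m n k*(b+k)/(b-k)) {0..m} x
        = FF (cf (Suc m) n) (df (Suc m) n) {0..m} x"
      by (rule FF_cong) (use CM in \<open>auto simp: b_def\<close>)
    moreover have "2*b*FF (cf m n) (df m n) {0..m} (-b) = ee (Suc m) n (Suc m)"
      unfolding IHb unfolding b_def by (rule Rneg[OF assms(1)])
    ultimately show ?thesis by simp
  qed
  also have "\<dots> = FF (cf (Suc m) n) (df (Suc m) n) {0..Suc m} x"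
    unfolding FF_split_last using assms(1) by (simp add: cf_def df_def b_def add_ac)
  finally show "FF (cf (Suc m) n) (df (Suc m) n) {0..Suc m} x = RR (Suc m) n x" by simp
qed


lemma auxN: fixes x a C S :: real
  assumes "x + a \<noteq> 0" "a \<noteq> 0"
  shows "2*a*((-C/2)*(-1/(2*a) - S))/(x+a) + (-C/2)/(x+a)*((a-x)/(x+a)) = C*(1+a*S)/(x+a) + (-C*a)/(x+a)^2"
proof -
  obtain t where t: "t = x + a" by blast
  have xe: "x = t - a" using t by simp
  have "t \<noteq> 0" using assms t by simp
  then show ?thesis unfolding xe using assms(2) by (simp add: field_simps power2_eq_square)
qed

lemma nstep: assumes "Suc n \<le> m" "PP m n" shows "PP m (Suc n)"
  unfolding PP_def
proof (intro allI impI)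
  fix x assume hx: "\<forall>k\<le>m. x + real k \<noteq> 0"
  define a where "a = real n + 1"
  define K where "K = {0..m} - {Suc n}"
  define e where "e = ee m n (Suc n)"
  define C where "C = cc m (Suc n) (Suc n)"
  define S where "S = SS m (Suc n) (Suc n)"
  have xa: "x + a \<noteq> 0" using hx[rule_format, of "Suc n"] assms(1) by (simp add: a_def add_ac)
  have a0: "a \<noteq> 0" by (simp add: a_def)
  have hK: "\<forall>k\<in>K. x + real k \<noteq> 0" "\<forall>k\<in>K. real k \<noteq> a" "finite K" using hx by (auto simp: K_def a_def)
  have IH: "FF (cf m n) (df m n) {0..m} x = RR m n x" using assms(2) hx unfolding PP_def by blast
  have sp: "FF (cf m n) (df m n) {0..m} x = FF (cf m n) (df m n) K x + e/(x+a)"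
    unfolding K_def e_def a_def
    by (subst FF_remove[of _ "Suc n"]) (use assms(1) in \<open>auto simp: cf_def df_def add_ac\<close>)
  have sp2: "FF (cf m (Suc n)) (df m (Suc n)) {0..m} x = FF (cf m (Suc n)) (df m (Suc n)) K x + C*(1+a*S)/(x+a) + (-C*a)/(x+a)^2"
    unfolding K_def C_def S_def a_def
    by (subst FF_remove[of _ "Suc n"]) (use assms(1) in \<open>auto simp: cf_def df_def add_ac\<close>)
  have GV: "FF (cf m n) (df m n) K (-a) = e*(-1/(2*a) - S)"
    unfolding K_def e_def S_def a_def by (rule Gval[OF assms])
  have eC: "e = -C/2" unfolding e_def C_def by (rule ee_a)
  have "RR m (Suc n) x = RR m n x * ((a - x)/(x+a))" unfolding a_def by (rule RR_n)
  also have "\<dots> = (FF (cf m n) (df m n) K x + e/(x+a)) * ((a - x)/(x+a))" by (simp only: IH[symmetric] sp)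
  also have "\<dots> = FF (cf m n) (df m n) K x * ((a - x)/(x+a)) + e/(x+a) * ((a - x)/(x+a))"
    by (simp only: distrib_right)
  also have "FF (cf m n) (df m n) K x * ((a - x)/(x+a)) = FF (\<lambda>k. cf m n k * (a + k)/(a - k) - 2*a*df m n k/(a-k)^2) (\<lambda>k. df m n k*(a+k)/(a-k)) K x
       + 2*a*FF (cf m n) (df m n) K (-a) / (x+a)"
    by (rule stepA) (use hK xa in auto)
  also have "FF (\<lambda>k. cf m n k * (a + k)/(a - k) - 2*a*df m n k/(a-k)^2) (\<lambda>k. df m n k*(a+k)/(a-k)) K x
        = FF (cf m (Suc n)) (df m (Suc n)) K x"
    by (rule FF_cong) (use CN in \<open>auto simp: a_def K_def\<close>)
  also have "FF (cf m (Suc n)) (df m (Suc n)) K x + 2*a*FF (cf m n) (df m n) K (-a) / (x+a) + e/(x+a) * ((a - x)/(x+a))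
      = FF (cf m (Suc n)) (df m (Suc n)) K x + (2*a*((-C/2)*(-1/(2*a) - S))/(x+a) + (-C/2)/(x+a)*((a-x)/(x+a)))"
    unfolding GV eC by simp
  also have "\<dots> = FF (cf m (Suc n)) (df m (Suc n)) {0..m} x"
    unfolding sp2 auxN[OF xa a0] by simp
  finally show "FF (cf m (Suc n)) (df m (Suc n)) {0..m} x = RR m (Suc n) x" by simp
qed

lemma PP00: "PP 0 0"
  unfolding PP_def FF_def RR_def cf_def df_def cc_def by (auto simp: SS_def)

lemma PP_all: "n \<le> m \<Longrightarrow> PP m n"
proof (induction n arbitrary: m)
  case 0
  show ?case
  proof (induction m)
    case 0 show ?case by (rule PP00)
  next
    case (Suc m) then show ?case using mstep by blast
  qed
next
  case (Suc n)
  then show ?case using nstep by simp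
qed




lemma of_rat_poch: "of_rat (pochhammer q k) = (pochhammer (of_rat q) k :: real)"
  by (simp add: pochhammer_prod of_rat_prod of_rat_add)

lemma of_rat_gharm: "of_rat (gharm 1 n) = HH n"
  by (simp add: gharm_def HH_def of_rat_sum of_rat_divide)

lemma Lreal_FF:
  assumes "n \<le> m" "\<forall>k\<le>m. X + real k \<noteq> 0"
  shows "(\<Sum>k=0..n. real ((m+k) choose k) * real (m choose k)
             * real ((n+k) choose k) * real (n choose k)
             * ( - real k / (X + real k)^2
                 + (1 + real k * (HH (m+k) + HH (m-k) + HH (n+k)
                                    + HH (n-k) - 4 * HH k)) / (X + real k)))
         + (\<Sum>k=n+1..m. (-1)^(k-n) / (X + real k)
             * real ((m+k) choose k) * real (m choose k) * real ((n+k) choose k)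
             / real ((k-1) choose n))
       = FF (cf m n) (df m n) {0..m} X"
proof -
  have se: "{0..m} = {0..n} \<union> {n+1..m}" using assms(1) by auto
  have "FF (cf m n) (df m n) {0..m} X = FF (cf m n) (df m n) {0..n} X + FF (cf m n) (df m n) {n+1..m} X"
    unfolding FF_def se by (rule sum.union_disjoint) auto
  moreover have "FF (cf m n) (df m n) {0..n} X = (\<Sum>k=0..n. real ((m+k) choose k) * real (m choose k)
             * real ((n+k) choose k) * real (n choose k)
             * ( - real k / (X + real k)^2
                 + (1 + real k * (HH (m+k) + HH (m-k) + HH (n+k)
                                    + HH (n-k) - 4 * HH k)) / (X + real k)))"
    unfolding FF_def
  proof (rule sum.cong[OF refl])
    fix k assume k: "k \<in> {0..n}"
    then have "X + real k \<noteq> 0" using assms by auto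
    then show "cf m n k / (X + real k) + df m n k / (X + real k)^2 = real ((m+k) choose k) * real (m choose k)
             * real ((n+k) choose k) * real (n choose k)
             * ( - real k / (X + real k)^2
                 + (1 + real k * (HH (m+k) + HH (m-k) + HH (n+k)
                                    + HH (n-k) - 4 * HH k)) / (X + real k))"
      using k by (simp add: cf_def df_def cc_def SS_def field_simps)
  qed
  moreover have "FF (cf m n) (df m n) {n+1..m} X = (\<Sum>k=n+1..m. (-1)^(k-n) / (X + real k)
             * real ((m+k) choose k) * real (m choose k) * real ((n+k) choose k)
             / real ((k-1) choose n))"
    unfolding FF_def
    by (rule sum.cong[OF refl]) (auto simp: cf_def df_def ee_def)
  ultimately show ?thesis by simp
qed

theorem theorem2p1:
  fixes x :: rat and m n :: nat
  assumes "0 < n" and "n \<le> m"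
    and "\<forall>k\<le>m. x + of_nat k \<noteq> 0"
  shows "(\<Sum>k=0..n. of_nat ((m+k) choose k) * of_nat (m choose k)
             * of_nat ((n+k) choose k) * of_nat (n choose k)
             * ( - of_nat k / (x + of_nat k)^2
                 + (1 + of_nat k * (gharm 1 (m+k) + gharm 1 (m-k) + gharm 1 (n+k)
                                    + gharm 1 (n-k) - 4 * gharm 1 k)) / (x + of_nat k)))
         + (\<Sum>k=n+1..m. (-1)^(k-n) / (x + of_nat k)
             * of_nat ((m+k) choose k) * of_nat (m choose k) * of_nat ((n+k) choose k)
             / of_nat ((k-1) choose n))
         = x * pochhammer (1 - x) n * pochhammer (1 - x) m
           / (pochhammer x (n+1) * pochhammer x (m+1))"
proof -
  define X where "X = (of_rat x :: real)"
  have hX: "\<forall>k\<le>m. X + real k \<noteq> 0"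
  proof (intro allI impI)
    fix k assume "k \<le> m"
    then have "x + of_nat k \<noteq> 0" using assms(3) by blast
    then have "of_rat (x + of_nat k) \<noteq> (0::real)" by simp
    then show "X + real k \<noteq> 0" by (simp add: X_def of_rat_add)
  qed
  have P: "FF (cf m n) (df m n) {0..m} X = RR m n X"
    using PP_all[OF assms(2)] hX unfolding PP_def by blast
  show ?thesis
    apply (rule of_rat_eq_iff[where 'a=real, THEN iffD1])
    apply (simp only: of_rat_add of_rat_mult of_rat_divide of_rat_sum of_rat_minus of_rat_diff of_rat_power
       of_rat_of_nat_eq of_rat_1 of_rat_gharm of_rat_numeral_eq of_rat_poch flip: X_def)
    apply (subst Lreal_FF[OF assms(2) hX])
    apply (simp add: P RR_def)
    done
qed


end
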